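(* Let $f(x)=(1-x)^\alpha$ or $f(x)=(1+x)^\alpha$, where $\operatorname{Re}(\alpha)>-\tfrac12$ and $\alpha$ is not an integer. Then for $\operatorname{Re}(\lambda)>-\tfrac12$ and $\operatorname{Re}(\lambda+\alpha)>-\tfrac12$, the Gegenbauer coefficients of $f$ are, for all $n\ge0$, \[ a_n^\lambda=\mu_n\,\frac{2^{4\lambda+\alpha-1}\Gamma(\lambda)^2\Gamma(\alpha+\lambda+\frac12)\Gamma(\lambda+\frac12)\Gamma(\alpha+1)(n+\lambda)}{\pi\,\Gamma(2\lambda)\Gamma(\alpha-n+1)\Gamma(\alpha+2\lambda+n+1)}, \] where $\mu_n=(-1)^n$ for $f(x)=(1-x)^\alpha$ and $\mu_n=1$ for $f(x)=(1+x)^\alpha$.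
   Context: $C_n^{(\lambda)}$ is the Gegenbauer polynomial normalized by $C_n^{(\lambda)}(1)=\Gamma(n+2\lambda)/(n!\,\Gamma(2\lambda))$ ($\lambda\ne0$), orthogonal on $[-1,1]$ with weight $(1-x^2)^{\lambda-1/2}$, with $h_n^{(\lambda)}=\frac{2^{1-2\lambda}\pi}{\Gamma(\lambda)^2}\frac{\Gamma(n+2\lambda)}{\Gamma(n+1)(n+\lambda)}$; the Gegenbauer coefficients are $a_n^{\lambda}=\frac{1}{h_n^{(\lambda)}}\int_{-1}^1(1-x^2)^{\lambda-1/2}f(x)C_n^{(\lambda)}(x)\,dx$. *)

theory Defs
  imports "HOL-Analysis.Analysis"
begin

text \<open>Gegenbauer polynomial with complex parameter l (l \<noteq> 0), explicit standard formula,
  normalized so that C_n(1) = Gamma(n+2l)/(n! Gamma(2l)).\<close>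
definition gegenbauer :: "complex \<Rightarrow> nat \<Rightarrow> real \<Rightarrow> complex" where
  "gegenbauer l n x =
     (\<Sum>k\<le>n div 2. (-1)^k * pochhammer l (n - k) / (fact k * fact (n - 2*k))
                     * (2 * complex_of_real x) ^ (n - 2*k))"

definition gegenbauer_h :: "complex \<Rightarrow> nat \<Rightarrow> complex" where
  "gegenbauer_h l n =
     (2 powr (1 - 2*l)) * complex_of_real pi / (Gamma l)^2
     * Gamma (of_nat n + 2*l) / (Gamma (of_nat n + 1) * (of_nat n + l))"

definition gegenbauer_coeff :: "complex \<Rightarrow> (real \<Rightarrow> complex) \<Rightarrow> nat \<Rightarrow> complex" where
  "gegenbauer_coeff l f n =
     integral {-1..1} (\<lambda>x. complex_of_real (1 - x^2) powr (l - 1/2) * f x * gegenbauer l n x)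
     / gegenbauer_h l n"

end

theory Submission
  imports Defs
begin

lemma cpowr_pos: "x > 0 \<Longrightarrow> complex_of_real x powr z = exp (z * of_real (ln x))"
  by (simp add: powr_def Ln_of_real)

lemma cpowr_mult_pos:
  assumes "x > 0" "y > 0"
  shows "complex_of_real (x*y) powr z = of_real x powr z * of_real y powr z"
proof -
  have "complex_of_real (x*y) powr z = exp (z * of_real (ln (x*y)))" using assms by (intro cpowr_pos) simp
  also have "\<dots> = exp (z * of_real (ln x)) * exp (z * of_real (ln y))"
    using assms by (simp add: ln_mult distrib_left exp_add)
  finally show ?thesis using assms by (simp add: cpowr_pos)
qed

lemma cpowr_add_pos:
  assumes "x > 0"
  shows "complex_of_real x powr (a + b) = of_real x powr a * of_real x powr b"
  using assms by (simp add: cpowr_pos distrib_right exp_add)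

lemma cpowr_one_pos:
  assumes "x > 0"
  shows "complex_of_real x powr (a + 1) = of_real x powr a * of_real x"
  using assms by (simp add: cpowr_add_pos)

lemma norm_cpowr: "x \<ge> 0 \<Longrightarrow> norm (complex_of_real x powr z) = x powr Re z"
  by (simp add: norm_powr_real_powr)

lemma norm_cpowr1: "x \<le> 1 \<Longrightarrow> norm ((1 - complex_of_real x) powr z) = (1 - x) powr Re z"
  using norm_cpowr[of "1 - x" z] by simp

lemma norm_cpowr2: "x \<ge> -1 \<Longrightarrow> norm ((1 + complex_of_real x) powr z) = (1 + x) powr Re z"
  using norm_cpowr[of "1 + x" z] by simp

definition BE :: "complex \<Rightarrow> complex \<Rightarrow> real \<Rightarrow> complex" where
  "BE a b t = of_real t powr (a - 1) * of_real (1 - t) powr (b - 1)"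

lemma BE_integrable:
  assumes "Re a > 0" "Re b > 0"
  shows "BE a b integrable_on {0..1}"
proof -
  have "BE a b absolutely_integrable_on {0<..<1}"
  proof (rule measurable_bounded_by_integrable_imp_absolutely_integrable)
    show "BE a b \<in> borel_measurable (lebesgue_on {0<..<1})"
      unfolding BE_def
      by (intro continuous_imp_measurable_on_sets_lebesgue continuous_intros) (auto simp: nonpos_Reals_def)
    show "{0<..<1::real} \<in> sets lebesgue" by simp
    show "(\<lambda>t. t powr (Re a - 1) * (1 - t) powr (Re b - 1)) integrable_on {0<..<1}"
      using integrable_Beta'[of "Re a" "Re b"] assms by (simp add: integrable_on_open_interval_real)
    fix x :: real assume "x \<in> {0<..<1}"
    then show "norm (BE a b x) \<le> x powr (Re a - 1) * (1 - x) powr (Re b - 1)"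
      by (simp add: BE_def norm_mult norm_cpowr norm_cpowr1)
  qed
  then have "BE a b integrable_on {0<..<1}" using set_lebesgue_integral_eq_integral(1) by blast
  then show ?thesis by (simp add: integrable_on_open_interval_real)
qed

lemma BE_rec:
  assumes a: "Re a > 0" and b: "Re b > 0"
  shows "a * integral {0..1} (BE a (b+1)) = b * integral {0..1} (BE (a+1) b)"
proof -
  define F where "F = (\<lambda>t::real. complex_of_real t powr a * complex_of_real (1 - t) powr b)"
  have "((\<lambda>t. a * BE a (b+1) t - b * BE (a+1) b t) has_integral (F 1 - F 0)) {0..1}"
  proof (rule fundamental_theorem_of_calculus_interior)
    show "continuous_on {0..1} F" unfolding F_def using a b
      by (intro continuous_intros) auto
    fix t :: real assume t: "t \<in> {0<..<1}"
    have "((\<lambda>z. z powr a * (1 - z) powr b) has_field_derivative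
            (a * of_real t powr (a - 1) * of_real (1-t) powr b - b * of_real t powr a * of_real (1-t) powr (b-1)))
          (at (complex_of_real t))"
      using t by (auto intro!: derivative_eq_intros simp: complex_nonpos_Reals_iff)
    from has_vector_derivative_real_field[OF this, of UNIV]
    show "(F has_vector_derivative (a * BE a (b+1) t - b * BE (a+1) b t)) (at t)"
      unfolding F_def BE_def by (simp add: mult.assoc)
  qed simp
  moreover have "F 1 = 0" "F 0 = 0" using a b by (auto simp: F_def)
  ultimately have h1: "((\<lambda>t. a * BE a (b+1) t - b * BE (a+1) b t) has_integral 0) {0..1}" by simp
  have i1: "BE a (b+1) integrable_on {0..1}" "BE (a+1) b integrable_on {0..1}"
    using a b by (auto intro!: BE_integrable)
  have "((\<lambda>t. a * BE a (b+1) t - b * BE (a+1) b t) has_integral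
          (a * integral {0..1} (BE a (b+1)) - b * integral {0..1} (BE (a+1) b))) {0..1}"
    by (intro has_integral_diff has_integral_mult_right integrable_integral i1)
  from has_integral_unique[OF h1 this] show ?thesis by simp
qed

lemma cpowr_minus_one_pos: "x > 0 \<Longrightarrow> complex_of_real x powr a = of_real x powr (a - 1) * of_real x"
  using cpowr_one_pos[of x "a - 1"] by simp

lemma BE_split:
  assumes a: "Re a > 0" and b: "Re b > 0"
  shows "integral {0..1} (BE a b) = integral {0..1} (BE (a+1) b) + integral {0..1} (BE a (b+1))"
proof -
  have i1: "BE a (b+1) integrable_on {0..1}" "BE (a+1) b integrable_on {0..1}"
    using a b by (auto intro!: BE_integrable)
  have "((\<lambda>t. BE (a+1) b t + BE a (b+1) t) has_integral
          (integral {0..1} (BE (a+1) b) + integral {0..1} (BE a (b+1)))) {0..1}"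
    by (intro has_integral_add integrable_integral i1)
  note h = this
  have "(BE a b has_integral
          (integral {0..1} (BE (a+1) b) + integral {0..1} (BE a (b+1)))) {0..1}"
  proof (rule has_integral_spike_finite[where S="{0,1}", OF _ _ h])
    fix t assume "t \<in> {0..1::real} - {0,1}"
    then have t: "t > 0" "1 - t > 0" by auto
    have e1: "complex_of_real t powr a = of_real t powr (a-1) * of_real t"
      by (rule cpowr_minus_one_pos[OF t(1)])
    have e2: "(1 - complex_of_real t) powr b = (1 - complex_of_real t) powr (b-1) * (1 - of_real t)"
      using cpowr_minus_one_pos[OF t(2), of b] by simp
    show "BE a b t = BE (a+1) b t + BE a (b+1) t"
      unfolding BE_def by (simp add: e1 e2 algebra_simps)
  qed simp
  then show ?thesis by (simp add: integral_unique)
qed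

lemma BE_step:
  assumes a: "Re a > 0" and b: "Re b > 0"
  shows "integral {0..1} (BE a b) * b = integral {0..1} (BE a (b+1)) * (a + b)"
  using BE_split[OF a b] BE_rec[OF a b] by (simp add: algebra_simps)

lemma BE_poch:
  assumes a: "Re a > 0" and b: "Re b > 0"
  shows "integral {0..1} (BE a b) * pochhammer b N = integral {0..1} (BE a (b + of_nat N)) * pochhammer (a+b) N"
proof (induction N)
  case 0 then show ?case by simp
next
  case (Suc N)
  have "Re (b + of_nat N) > 0" using b by simp
  from BE_step[OF a this]
  have st: "integral {0..1} (BE a (b + of_nat N)) * (b + of_nat N) =
            integral {0..1} (BE a (b + of_nat (Suc N))) * (a + b + of_nat N)"
    by (simp add: add_ac)
  have "integral {0..1} (BE a b) * pochhammer b (Suc N) =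
        (integral {0..1} (BE a b) * pochhammer b N) * (b + of_nat N)"
    by (simp add: pochhammer_Suc)
  also have "\<dots> = integral {0..1} (BE a (b + of_nat N)) * (b + of_nat N) * pochhammer (a+b) N"
    using Suc by simp
  also have "\<dots> = integral {0..1} (BE a (b + of_nat (Suc N))) * ((a + b + of_nat N) * pochhammer (a+b) N)"
    using st by simp
  also have "\<dots> = integral {0..1} (BE a (b + of_nat (Suc N))) * pochhammer (a+b) (Suc N)"
    by (simp add: pochhammer_Suc)
  finally show ?case .
qed

lemma cpowr_div_pos:
  assumes "x > 0" "y > 0"
  shows "complex_of_real (x/y) powr z = of_real x powr z / of_real y powr z"
proof -
  have "complex_of_real (x/y) powr z = exp (z * of_real (ln (x/y)))" using assms by (intro cpowr_pos) simp
  also have "\<dots> = exp (z * of_real (ln x)) / exp (z * of_real (ln y))"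
    using assms by (simp add: ln_div right_diff_distrib exp_diff)
  finally show ?thesis using assms by (simp add: cpowr_pos)
qed

lemma BE_subst:
  assumes a: "Re a > 0" and c: "Re c > 0" and N: "N > 0"
  shows "((\<lambda>s. of_real s powr (a-1) * of_real (1 - s / real N) powr (c-1)) has_integral
           (of_nat N powr a * integral {0..1} (BE a c))) {0..real N}"
proof -
  have "(BE a c has_integral integral {0..1} (BE a c)) (cbox 0 1)"
    using BE_integrable[OF a c] by (simp add: integrable_integral)
  from has_integral_affinity[OF this, of "1 / real N" 0] N
  have "((\<lambda>x. BE a c (x / real N)) has_integral real N *\<^sub>R integral {0..1} (BE a c))
          ((\<lambda>x. real N * x) ` {0..1})" by simp
  also have "(\<lambda>x. real N * x) ` {0..1} = {0..real N}" using N by (simp add: image_mult_atLeastAtMost)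
  finally have h: "((\<lambda>x. BE a c (x / real N)) has_integral real N *\<^sub>R integral {0..1} (BE a c)) {0..real N}" .
  have "((\<lambda>x. of_nat N powr (a - 1) * BE a c (x / real N)) has_integral
          of_nat N powr (a - 1) * (real N *\<^sub>R integral {0..1} (BE a c))) {0..real N}"
    by (intro has_integral_mult_right h)
  also have "of_nat N powr (a - 1) * (real N *\<^sub>R integral {0..1} (BE a c)) =
             of_nat N powr a * integral {0..1} (BE a c)"
    using cpowr_minus_one_pos[of "real N" a] N by (simp add: scaleR_conv_of_real)
  finally have h2: "((\<lambda>x. of_nat N powr (a - 1) * BE a c (x / real N)) has_integral
          of_nat N powr a * integral {0..1} (BE a c)) {0..real N}" .
  show ?thesis
  proof (rule has_integral_spike_finite[where S="{0}", OF _ _ h2])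
    fix s assume s: "s \<in> {0..real N} - {0}"
    then have "s > 0" by auto
    then show "of_real s powr (a-1) * of_real (1 - s / real N) powr (c-1) =
               of_nat N powr (a - 1) * BE a c (s / real N)"
      using N cpowr_div_pos[of s "real N" "a - 1"] by (simp add: BE_def)
  qed simp
qed

lemma exp_bound_aux:
  fixes s \<beta> :: real and N :: nat
  assumes s: "0 \<le> s" "s \<le> real N" and N: "N \<ge> 2" and \<beta>: "\<beta> > 0"
  shows "(1 - s / real N) powr (\<beta> + real N - 1) \<le> exp (- s / 2)"
proof (cases "s = real N")
  case True then show ?thesis by simp
next
  case False
  define u where "u = 1 - s / real N"
  have u: "u > 0" using s False N unfolding u_def by (simp add: field_simps)
  have lu: "ln u \<le> - s / real N" using ln_le_minus_one[OF u] by (simp add: u_def)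
  have "- s / real N \<le> 0" using s N by simp
  then have lu0: "ln u \<le> 0" using lu by linarith
  have "(\<beta> + real N - 1) * ln u \<le> (real N / 2) * ln u"
    using N \<beta> lu0 by (intro mult_right_mono_neg) auto
  also have "\<dots> \<le> (real N / 2) * (- s / real N)"
    using N lu by (intro mult_left_mono) auto
  also have "\<dots> = - s / 2" using N by simp
  finally have "(\<beta> + real N - 1) * ln u \<le> - s / 2" .
  then show ?thesis using u by (simp add: powr_def u_def[symmetric])
qed

lemma BE_limit:
  assumes a: "Re a > 0" and b: "Re b > 0"
  shows "(\<lambda>k. of_nat (k+2) powr a * integral {0..1} (BE a (b + of_nat (k+2)))) \<longlonglongrightarrow> Gamma a"
proof -
  define f where "f = (\<lambda>k s. if s \<in> {0..real (k+2)} then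
      complex_of_real s powr (a-1) * of_real (1 - s / real (k+2)) powr (b + of_nat (k+2) - 1) else 0)"
  define g where "g = (\<lambda>s. complex_of_real s powr (a-1) / of_real (exp s))"
  define h where "h = (\<lambda>s. norm (complex_of_real s powr (a-1) / of_real (exp (1/2 * s))))"
  have fint: "(f k has_integral (of_nat (k+2) powr a * integral {0..1} (BE a (b + of_nat (k+2))))) {0..}" for k
  proof -
    have "Re (b + of_nat (k+2)) > 0" using b by simp
    from BE_subst[OF a this, of "k+2"]
    have "((\<lambda>s. of_real s powr (a-1) * of_real (1 - s / real (k+2)) powr (b + of_nat (k+2) - 1)) has_integral
           (of_nat (k+2) powr a * integral {0..1} (BE a (b + of_nat (k+2))))) {0..real (k+2)}"
      by simp
    then show ?thesis unfolding f_def
      by (subst has_integral_restrict) auto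
  qed
  have hint: "h integrable_on {0..}"
  proof -
    have "(\<lambda>t. complex_of_real t powr (a - 1) / of_real (exp (1/2 * t))) absolutely_integrable_on {0<..}"
      using absolutely_integrable_Gamma_integral[OF a, of "1/2"] by simp
    then have "h integrable_on {0<..}" unfolding h_def absolutely_integrable_on_def by blast
    then show ?thesis
      by (rule integrable_spike_set) (auto intro: negligible_subset[OF negligible_sing[of 0]])
  qed
  have bound: "norm (f k s) \<le> h s" if "s \<in> {0..}" for k s
  proof (cases "s \<in> {0..real (k+2)}")
    case True
    then have s: "0 \<le> s" "s \<le> real (k+2)" by auto
    have 1: "0 \<le> 1 - s / real (k+2)" using s by (simp add: field_simps)
    have n1: "norm (complex_of_real (1 - s / real (k+2)) powr (b + of_nat (k+2) - 1)) =
              (1 - s / real (k+2)) powr (Re b + real (k+2) - 1)"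
      using norm_cpowr[OF 1, of "b + of_nat (k+2) - 1"] by simp
    have n0: "norm (complex_of_real s powr (a - 1)) = s powr (Re a - 1)"
      using norm_cpowr[OF s(1), of "a - 1"] by simp
    have "norm (f k s) = norm (complex_of_real s powr (a-1)) *
            norm (complex_of_real (1 - s / real (k+2)) powr (b + of_nat (k+2) - 1))"
      unfolding f_def by (simp only: if_P[OF True] norm_mult)
    also have "\<dots> = s powr (Re a - 1) * (1 - s / real (k+2)) powr (Re b + real (k+2) - 1)"
      by (simp only: n0 n1)
    also have "\<dots> \<le> s powr (Re a - 1) * exp (- s / 2)"
      by (intro mult_left_mono exp_bound_aux s b) auto
    also have "\<dots> = h s" using s by (simp add: h_def norm_divide norm_cpowr exp_minus field_simps)
    finally show ?thesis .
  next
    case False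
    have "f k s = 0" unfolding f_def by (rule if_not_P[OF False])
    then show ?thesis by (simp add: h_def)
  qed
  have conv: "(\<lambda>k. f k s) \<longlonglongrightarrow> g s" if "s \<in> {0..}" for s
  proof -
    from that have s: "s \<ge> 0" by simp
    obtain M :: nat where M: "real M > s" using reals_Archimedean2 by blast
    have ev: "eventually (\<lambda>k. f k s = of_real s powr (a-1) *
               (of_real (1 - s / real (k+2)) powr (b - 1) * of_real ((1 + (-s) / real (k+2)) ^ (k+2)))) sequentially"
      using eventually_ge_at_top[of M]
    proof eventually_elim
      case (elim k)
      have pos: "1 - s / real (k+2) > 0" using elim M s by (simp add: field_simps)
      have "complex_of_real (1 - s / real (k+2)) powr (b + of_nat (k+2) - 1) =
            of_real (1 - s / real (k+2)) powr ((b - 1) + of_nat (k+2))"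
        by (simp add: algebra_simps)
      also have "\<dots> = of_real (1 - s / real (k+2)) powr (b - 1) * of_real (1 - s / real (k+2)) powr (of_nat (k+2))"
        using pos by (rule cpowr_add_pos)
      also have "of_real (1 - s / real (k+2)) powr (of_nat (k+2)) = complex_of_real ((1 - s / real (k+2)) ^ (k+2))"
        using pos by (subst powr_nat') auto
      finally show ?case using elim M s by (simp add: f_def)
    qed
    have l1: "(\<lambda>k. (1 + (-s) / real (k+2)) ^ (k+2)) \<longlonglongrightarrow> exp (-s)"
      using LIMSEQ_ignore_initial_segment[OF tendsto_exp_limit_sequentially[of "-s"], of 2] by simp
    have l0: "(\<lambda>k. s / real (k+2)) \<longlonglongrightarrow> 0"
      using LIMSEQ_ignore_initial_segment[OF lim_const_over_n[of s], where k=2] by simp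
    have l2: "(\<lambda>k. complex_of_real (1 - s / real (k+2)) powr (b - 1)) \<longlonglongrightarrow> of_real (1 - 0) powr (b - 1)"
      by (intro tendsto_intros l0) (auto simp: nonpos_Reals_def)
    have "(\<lambda>k. of_real s powr (a-1) *
               (of_real (1 - s / real (k+2)) powr (b - 1) * of_real ((1 + (-s) / real (k+2)) ^ (k+2))))
            \<longlonglongrightarrow> of_real s powr (a-1) * (of_real (1 - 0) powr (b - 1) * of_real (exp (-s)))"
      by (intro tendsto_intros l1 l2)
    then have "(\<lambda>k. f k s) \<longlonglongrightarrow> of_real s powr (a-1) * (of_real (1 - 0) powr (b - 1) * of_real (exp (-s)))"
      by (rule Lim_transform_eventually) (rule eventually_mono[OF ev], simp)
    then show ?thesis by (simp add: g_def exp_minus divide_inverse)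
  qed
  have "(\<lambda>k. integral {0..} (f k)) \<longlonglongrightarrow> integral {0..} g"
    by (rule dominated_convergence(2)[OF _ hint bound conv]) (use fint in \<open>auto simp: integrable_on_def\<close>)
  moreover have "integral {0..} g = Gamma a"
    unfolding g_def using Gamma_integral_complex[OF a] by (rule integral_unique)
  moreover have "integral {0..} (f k) = of_nat (k+2) powr a * integral {0..1} (BE a (b + of_nat (k+2)))" for k
    using fint[of k] by (rule integral_unique)
  ultimately show ?thesis by simp
qed

lemma Re_pos_not_nonpos_Int: "Re z > 0 \<Longrightarrow> z \<notin> \<int>\<^sub>\<le>\<^sub>0"
proof
  assume "Re z > 0" "z \<in> \<int>\<^sub>\<le>\<^sub>0"
  then obtain n where "z = of_int n" "n \<le> 0" by (auto elim!: nonpos_Ints_cases)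
  with \<open>Re z > 0\<close> show False by simp
qed

lemma Re_pos_poch_nz: "Re z > 0 \<Longrightarrow> pochhammer z n \<noteq> 0"
proof
  assume "Re z > 0" "pochhammer z n = 0"
  then obtain k where "z = - of_nat k" by (auto simp: pochhammer_eq_0_iff)
  with \<open>Re z > 0\<close> show False by simp
qed

lemma BetaC:
  assumes a: "Re a > 0" and b: "Re b > 0"
  shows "(BE a b has_integral Beta a b) {0..1}"
proof -
  define I where "I = integral {0..1} (BE a b)"
  define r where "r = (\<lambda>k::nat. Gamma_series' b (k+2) / Gamma_series' (a+b) (k+2))"
  have nz: "Gamma (a+b) \<noteq> 0" using a b Re_pos_not_nonpos_Int[of "a+b"] by (auto simp: Gamma_eq_zero_iff)
  have rlim: "r \<longlonglongrightarrow> Gamma b / Gamma (a+b)"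
    unfolding r_def
    by (intro tendsto_divide nz LIMSEQ_ignore_initial_segment[OF Gamma_series'_LIMSEQ, of _ 2])
  have pb: "pochhammer b n \<noteq> 0" for n using b by (rule Re_pos_poch_nz)
  have pab: "pochhammer (a+b) n \<noteq> 0" for n using a b by (intro Re_pos_poch_nz) simp
  have eq: "(of_nat (k+2) powr a * integral {0..1} (BE a (b + of_nat (k+2)))) * r k = I" for k
  proof -
    define N where "N = k + 2"
    have N: "real N > 0" by (simp add: N_def)
    have "r k = pochhammer (a+b) N / (pochhammer b N * of_nat N powr a)"
      unfolding r_def Gamma_series'_def N_def[symmetric]
      using pb[of N] pab[of N] N cpowr_pos[of "real N" a] cpowr_pos[of "real N" b] cpowr_pos[of "real N" "a+b"]
      by (simp add: field_simps exp_add distrib_right)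
    moreover have "of_nat N powr a \<noteq> (0::complex)" using N by simp
    moreover have "I * pochhammer b N = integral {0..1} (BE a (b + of_nat N)) * pochhammer (a+b) N"
      unfolding I_def by (rule BE_poch[OF a b])
    ultimately have e1: "r k * (pochhammer b N * of_nat N powr a) = pochhammer (a+b) N"
      and e2: "I * pochhammer b N = integral {0..1} (BE a (b + of_nat N)) * pochhammer (a+b) N"
      using pb[of N] by (auto simp: field_simps)
    have "(of_nat N powr a * integral {0..1} (BE a (b + of_nat N))) * r k * pochhammer b N
          = integral {0..1} (BE a (b + of_nat N)) * (r k * (pochhammer b N * of_nat N powr a))"
      by (simp add: algebra_simps)
    also have "\<dots> = I * pochhammer b N" using e1 e2 by simp
    finally show ?thesis using pb[of N] unfolding N_def[symmetric] by simp
  qed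
  have "(\<lambda>k. (of_nat (k+2) powr a * integral {0..1} (BE a (b + of_nat (k+2)))) * r k)
          \<longlonglongrightarrow> Gamma a * (Gamma b / Gamma (a+b))"
    by (intro tendsto_mult BE_limit a b rlim)
  then have "I = Gamma a * (Gamma b / Gamma (a+b))"
    using eq by (simp add: LIMSEQ_const_iff)
  then have "I = Beta a b" by (simp add: Beta_def)
  then show ?thesis unfolding I_def using integrable_integral[OF BE_integrable[OF a b]] by simp
qed

lemma c2powr_add: "(2::complex) powr (a + b) = 2 powr a * 2 powr b"
  using cpowr_add_pos[of 2 a b] by simp

lemma Beta2:
  assumes p: "Re p > -1" and q: "Re q > -1"
  shows "((\<lambda>x. complex_of_real (1-x) powr p * of_real (1+x) powr q) has_integral
           (2 powr (p+q+1) * Beta (p+1) (q+1))) {-1..1}"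
proof -
  have "(BE (q+1) (p+1) has_integral Beta (q+1) (p+1)) (cbox 0 1)"
    using BetaC[of "q+1" "p+1"] p q by simp
  from has_integral_affinity[OF this, of "1/2" "1/2"]
  have "((\<lambda>x. BE (q+1) (p+1) (x/2 + 1/2)) has_integral 2 *\<^sub>R Beta (q+1) (p+1))
          ((\<lambda>x. 2 * x - 1) ` {0..1})" by (simp add: field_simps)
  also have "(\<lambda>x. 2 * x - 1) ` {0..1::real} = {-1..1}"
    using image_affinity_atLeastAtMost_diff[of "2::real" 1 0 1] by simp
  finally have h: "((\<lambda>x. BE (q+1) (p+1) (x/2 + 1/2)) has_integral 2 *\<^sub>R Beta (q+1) (p+1)) {-1..1}" .
  have "((\<lambda>x. 2 powr (p+q) * BE (q+1) (p+1) (x/2 + 1/2)) has_integral 2 powr (p+q) * (2 *\<^sub>R Beta (q+1) (p+1))) {-1..1}"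
    by (intro has_integral_mult_right h)
  also have "2 powr (p+q) * (2 *\<^sub>R Beta (q+1) (p+1)) = 2 powr (p+q+1) * Beta (p+1) (q+1)"
    by (simp add: c2powr_add Beta_commute scaleR_conv_of_real)
  finally have h2: "((\<lambda>x. 2 powr (p+q) * BE (q+1) (p+1) (x/2 + 1/2)) has_integral 2 powr (p+q+1) * Beta (p+1) (q+1)) {-1..1}" .
  show ?thesis
  proof (rule has_integral_spike_finite[where S="{-1,1}", OF _ _ h2])
    fix x assume x: "x \<in> {-1..1::real} - {-1,1}"
    then have x1: "1 + x > 0" "1 - x > 0" by auto
    have e1: "x/2 + 1/2 = (1+x)/2" "1 - (x/2 + 1/2) = (1-x)/2" by (simp_all add: field_simps)
    show "complex_of_real (1-x) powr p * of_real (1+x) powr q = 2 powr (p+q) * BE (q+1) (p+1) (x/2 + 1/2)"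
      unfolding BE_def e1 using cpowr_div_pos[of "1+x" 2 q] cpowr_div_pos[of "1-x" 2 p] x1
      by (simp add: c2powr_add field_simps)
  qed simp
qed

definition ga :: "complex \<Rightarrow> nat \<Rightarrow> nat \<Rightarrow> complex" where
  "ga l n k = (if 2*k \<le> n then (-1)^k * pochhammer l (n-k) / (fact k * fact (n-2*k)) else 0)"

definition gp :: "complex \<Rightarrow> nat \<Rightarrow> complex \<Rightarrow> complex" where
  "gp l n z = (\<Sum>k\<le>n. ga l n k * (2*z)^(n-2*k))"

definition gpd :: "complex \<Rightarrow> nat \<Rightarrow> complex \<Rightarrow> complex" where
  "gpd l n z = (\<Sum>k\<le>n. ga l n k * of_nat (n-2*k) * 2 * (2*z)^(n-2*k-1))"

lemma gp_ext:
  assumes "n \<le> M"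
  shows "gp l n z = (\<Sum>k\<le>M. ga l n k * (2*z)^(n-2*k))"
  unfolding gp_def
  by (rule sum.mono_neutral_left) (use assms in \<open>auto simp: ga_def\<close>)

lemma gpd_ext:
  assumes "n \<le> M"
  shows "gpd l n z = (\<Sum>k\<le>M. ga l n k * of_nat (n-2*k) * 2 * (2*z)^(n-2*k-1))"
  unfolding gpd_def
  by (rule sum.mono_neutral_left) (use assms in \<open>auto simp: ga_def\<close>)

lemma gegenbauer_gp: "gegenbauer l n x = gp l n (complex_of_real x)"
proof -
  have "gp l n (complex_of_real x) = (\<Sum>k\<le>n div 2. ga l n k * (2*complex_of_real x)^(n-2*k))"
    unfolding gp_def
    by (rule sum.mono_neutral_right) (auto simp: ga_def)
  also have "\<dots> = gegenbauer l n x"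
    unfolding gegenbauer_def by (intro sum.cong refl) (auto simp: ga_def)
  finally show ?thesis by simp
qed

lemma deriv_pow2: "((\<lambda>z::complex. (2*z)^m) has_field_derivative (of_nat m * 2 * (2*z)^(m-1))) (at z)"
proof -
  have "((\<lambda>z::complex. (2*z)^m) has_field_derivative (of_nat m * (2 * (2*z)^(m - Suc 0)))) (at z)"
    using DERIV_power[OF DERIV_cmult_Id[of 2 z UNIV], of m] by simp
  then show ?thesis by (simp add: algebra_simps)
qed

lemma gp_deriv: "(gp l n has_field_derivative gpd l n z) (at z)"
proof -
  have "((\<lambda>z. \<Sum>k\<le>n. ga l n k * (2*z)^(n-2*k)) has_field_derivative
         (\<Sum>k\<le>n. ga l n k * (of_nat (n-2*k) * 2 * (2*z)^(n-2*k-1)))) (at z)"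
    by (intro DERIV_sum DERIV_cmult deriv_pow2)
  then show ?thesis unfolding gp_def[abs_def] gpd_def by (simp add: mult.assoc)
qed

lemma one_plus_of_nat_nz [simp]: "(1 + of_nat i :: complex) \<noteq> 0"
proof
  assume "1 + of_nat i = (0::complex)"
  then have "of_nat (Suc i) = (0::complex)" by (simp only: of_nat_Suc)
  then show False by (simp only: of_nat_eq_0_iff)
qed

lemma ga_termwise:
  assumes n: "n \<ge> 1"
  shows "4*l*(if k = 0 then 0 else ga (l+1) (n-1) (k-1) * of_nat (n-1-2*(k-1)))
         - l * ga (l+1) (n-1) k * of_nat (n-1-2*k) - l*(2*l+1) * ga (l+1) (n-1) k
         = - of_nat n * (of_nat n + 2*l) * ga l n k"
proof (cases "2*k \<le> n")
  case False
  then show ?thesis by (auto simp: ga_def)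
next
  case True
  then obtain m where nm: "n = m + 2*k" by (metis add.commute le_add_diff_inverse)
  show ?thesis
  proof (cases k)
    case 0
    with nm n obtain i where m: "m = Suc i" by (cases m) auto
    define P where "P = pochhammer (l+1) i"
    define F where "F = (fact i :: complex)"
    define ni where "ni = (of_nat (Suc i) :: complex)"
    have F: "F \<noteq> 0" "ni \<noteq> 0" by (simp_all add: F_def ni_def)
    have g1: "ga l n 0 = l * P / (ni * F)"
      unfolding nm m 0 by (simp add: ga_def P_def F_def ni_def pochhammer_rec)
    have g2: "ga (l+1) (n-1) 0 = P / F"
      unfolding nm m 0 by (simp add: ga_def P_def F_def)
    have e: "(of_nat (n - 1 - 2*0) :: complex) = ni - 1" "(of_nat n :: complex) = ni"
      unfolding nm m 0 ni_def by simp_all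
    show ?thesis unfolding 0 g1 g2 e using F
      by (simp add: field_simps, (simp add: algebra_simps)?)
  next
    case (Suc j)
    define s where "s = ((-1)^j :: complex)"
    define Fj where "Fj = (fact j :: complex)"
    define nj where "nj = (of_nat (Suc j) :: complex)"
    have Fj: "Fj \<noteq> 0" "nj \<noteq> 0" by (simp_all add: Fj_def nj_def)
    show ?thesis
    proof (cases m)
      case 0
      define P where "P = pochhammer (l+1) j"
      have g1: "ga l n (Suc j) = - s * l * P / (nj * Fj)"
        unfolding nm 0 Suc by (simp add: ga_def P_def Fj_def s_def nj_def pochhammer_rec)
      have g2: "ga (l+1) (n-1) j = s * P * (l + nj) / Fj"
      proof -
        have "n - 1 - j = Suc j" "n - 1 - 2*j = 1" "2*j \<le> n - 1" unfolding nm 0 Suc by simp_all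
        then show ?thesis by (simp add: ga_def P_def Fj_def s_def nj_def pochhammer_Suc add_ac)
      qed
      have g3: "ga (l+1) (n-1) (Suc j) = 0" unfolding nm 0 Suc by (simp add: ga_def)
      have e: "(of_nat (n - 1 - 2 * j) :: complex) = 1" "(of_nat n :: complex) = 2 * nj"
        unfolding nm 0 Suc nj_def by simp_all
      show ?thesis unfolding Suc diff_Suc_1 g1 g2 g3 e using Fj
        by (simp add: field_simps, (simp add: algebra_simps)?)
    next
      case (Suc i)
      define P where "P = pochhammer (l+1) (i+j+1)"
      define Fi where "Fi = (fact i :: complex)"
      define ni where "ni = (of_nat (Suc i) :: complex)"
      have Fi: "Fi \<noteq> 0" "ni \<noteq> 0" "ni + 1 \<noteq> 0"
        using one_plus_of_nat_nz[of "Suc i"] by (simp_all add: Fi_def ni_def add_ac)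
      have g1: "ga l n (Suc j) = - s * l * P / (nj * Fj * (ni * Fi))"
      proof -
        have "n - Suc j = Suc (i+j+1)" "n - 2 * Suc j = Suc i" "2 * Suc j \<le> n"
          unfolding nm \<open>m = Suc i\<close> \<open>k = Suc j\<close> by simp_all
        then show ?thesis by (simp add: ga_def P_def Fj_def Fi_def s_def ni_def nj_def pochhammer_rec)
      qed
      define N2 where "N2 = (of_nat (Suc (Suc i)) :: complex)"
      have N2: "N2 \<noteq> 0" unfolding N2_def by (simp only: of_nat_eq_0_iff)
      have h2: "ga (l+1) (n-1) j * of_nat (n-1-2*j) = s * P * (l + ni + nj) / (Fj * (ni * Fi))"
      proof -
        have "n - 1 - j = Suc (i+j+1)" "n - 1 - 2*j = Suc (Suc i)" "2*j \<le> n - 1"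
          unfolding nm \<open>m = Suc i\<close> \<open>k = Suc j\<close> by simp_all
        then have "ga (l+1) (n-1) j * of_nat (n-1-2*j) = s * (P * (l + ni + nj)) / (Fj * (N2 * (ni * Fi))) * N2"
          by (simp add: ga_def P_def Fj_def Fi_def s_def ni_def nj_def N2_def pochhammer_Suc add_ac)
        also have "\<dots> = s * P * (l + ni + nj) / (Fj * (ni * Fi))"
          using N2 Fi Fj by (simp add: field_simps)
        finally show ?thesis .
      qed
      have g3: "ga (l+1) (n-1) (Suc j) = - s * P / (nj * Fj * Fi)"
      proof -
        have "n - 1 - Suc j = i+j+1" "n - 1 - 2 * Suc j = i" "2 * Suc j \<le> n - 1"
          unfolding nm \<open>m = Suc i\<close> \<open>k = Suc j\<close> by simp_all
        then show ?thesis by (simp add: ga_def P_def Fj_def Fi_def s_def nj_def)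
      qed
      have e: "(of_nat (n - 1 - 2 * Suc j) :: complex) = ni - 1" "(of_nat n :: complex) = ni + 2 * nj"
        unfolding nm \<open>m = Suc i\<close> \<open>k = Suc j\<close> ni_def nj_def by simp_all
      show ?thesis unfolding \<open>k = Suc j\<close> diff_Suc_1 g1 h2 g3 e using Fj Fi
        by (simp add: field_simps)
    qed
  qed
qed

lemma gp_lower:
  assumes n: "n \<ge> 1"
  shows "2*l*((1 - z^2) * gpd (l+1) (n-1) z - (2*l+1)*z*gp (l+1) (n-1) z)
         = -(of_nat n * (of_nat n + 2*l)) * gp l n z"
proof -
  define b where "b = ga (l+1) (n-1)"
  define y where "y = 2*z"
  have le: "n - 1 \<le> Suc n" by simp
  have P1: "2*l*gpd (l+1) (n-1) z =
      (\<Sum>k\<le>Suc n. 4*l*(if k=0 then 0 else b (k-1) * of_nat (n-1-2*(k-1))) * y^(n-2*k))"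
  proof -
    have "2*l*gpd (l+1) (n-1) z = (\<Sum>k\<le>n. 4*l*(b k * of_nat (n-1-2*k)) * y^(n-2*Suc k))"
      unfolding gpd_ext[of "n-1" n, OF diff_le_self] sum_distrib_left
    proof (intro sum.cong refl)
      fix k
      have e: "n - 1 - 2*k - 1 = n - 2*Suc k" by simp
      show "2 * l * (ga (l + 1) (n - 1) k * of_nat (n - 1 - 2 * k) * 2 * (2 * z) ^ (n - 1 - 2 * k - 1)) =
            4 * l * (b k * of_nat (n - 1 - 2 * k)) * y ^ (n - 2 * Suc k)"
        unfolding e b_def y_def by simp
    qed
    also have "\<dots> = (\<Sum>k\<le>Suc n. 4*l*(if k=0 then 0 else b (k-1) * of_nat (n-1-2*(k-1))) * y^(n-2*k))"
      by (subst sum.atMost_Suc_shift) simp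
    finally show ?thesis .
  qed
  have P2: "-(2*l)*z^2*gpd (l+1) (n-1) z = (\<Sum>k\<le>Suc n. (- l * b k * of_nat (n-1-2*k)) * y^(n-2*k))"
    unfolding gpd_ext[OF le, of "l+1" z] sum_distrib_left
  proof (intro sum.cong refl)
    fix k
    show "- (2 * l) * z\<^sup>2 * (ga (l + 1) (n - 1) k * of_nat (n - 1 - 2 * k) * 2 * (2 * z) ^ (n - 1 - 2 * k - 1)) =
          - l * b k * of_nat (n - 1 - 2 * k) * y ^ (n - 2 * k)"
    proof (cases "n - 1 - 2*k")
      case 0 then show ?thesis by simp
    next
      case (Suc j)
      then have e1: "n - 1 - 2 * k - 1 = j" and e2: "n - 2*k = Suc (Suc j)" using n by auto
      show ?thesis unfolding e1 e2 Suc b_def y_def by (simp add: algebra_simps power2_eq_square)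
    qed
  qed
  have P3: "-(2*l)*(2*l+1)*z*gp (l+1) (n-1) z = (\<Sum>k\<le>Suc n. (- l*(2*l+1)*b k) * y^(n-2*k))"
    unfolding gp_ext[OF le, of "l+1" z] sum_distrib_left
  proof (intro sum.cong refl)
    fix k
    show "- (2 * l) * (2 * l + 1) * z * (ga (l + 1) (n - 1) k * (2 * z) ^ (n - 1 - 2 * k)) =
          - l * (2 * l + 1) * b k * y ^ (n - 2 * k)"
    proof (cases "2*k \<le> n - 1")
      case True
      then have e: "n - 2*k = Suc (n - 1 - 2*k)" using n by auto
      show ?thesis unfolding e b_def y_def by (simp add: algebra_simps)
    next
      case False then show ?thesis by (simp add: b_def ga_def)
    qed
  qed
  have R: "gp l n z = (\<Sum>k\<le>Suc n. ga l n k * y^(n-2*k))"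
    unfolding y_def by (rule gp_ext) simp
  have "2*l*((1 - z^2) * gpd (l+1) (n-1) z - (2*l+1)*z*gp (l+1) (n-1) z) =
        2*l*gpd (l+1) (n-1) z + (-(2*l)*z^2*gpd (l+1) (n-1) z) + (-(2*l)*(2*l+1)*z*gp (l+1) (n-1) z)"
    by (simp add: algebra_simps)
  also have "\<dots> = (\<Sum>k\<le>Suc n. (4*l*(if k=0 then 0 else b (k-1) * of_nat (n-1-2*(k-1)))
                     - l * b k * of_nat (n-1-2*k) - l*(2*l+1)*b k) * y^(n-2*k))"
    unfolding P1 P2 P3 sum.distrib[symmetric] by (intro sum.cong refl) (simp add: algebra_simps)
  also have "\<dots> = (\<Sum>k\<le>Suc n. (-(of_nat n * (of_nat n + 2*l)) * ga l n k) * y^(n-2*k))"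
    unfolding b_def using ga_termwise[OF n] by (intro sum.cong refl) simp
  also have "\<dots> = -(of_nat n * (of_nat n + 2*l)) * gp l n z"
    unfolding R sum_distrib_left by (simp add: mult.assoc)
  finally show ?thesis .
qed

definition Tn :: "nat \<Rightarrow> complex \<Rightarrow> complex \<Rightarrow> complex" where
  "Tn n l \<alpha> = 2 powr (2*l+\<alpha>) * Gamma (l + 1/2) * Gamma (l + \<alpha> + 1/2) * pochhammer (2*l) n
      * pochhammer (\<alpha> - of_nat n + 1) n / fact n * rGamma (\<alpha> + 2*l + of_nat n + 1)"

definition Wf :: "complex \<Rightarrow> complex \<Rightarrow> real \<Rightarrow> complex" where
  "Wf l \<alpha> x = (1 - complex_of_real x) powr (l - 1/2) * (1 + complex_of_real x) powr (l + \<alpha> - 1/2)"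

lemma pw1: "x < 1 \<Longrightarrow> (1 - complex_of_real x) powr a = (1 - complex_of_real x) powr (a-1) * (1 - complex_of_real x)"
  using cpowr_minus_one_pos[of "1-x" a] by simp

lemma pw2: "x > -1 \<Longrightarrow> (1 + complex_of_real x) powr a = (1 + complex_of_real x) powr (a-1) * (1 + complex_of_real x)"
  using cpowr_minus_one_pos[of "1+x" a] by simp

lemma continuous_on_gp [continuous_intros]:
  "continuous_on S f \<Longrightarrow> continuous_on S (\<lambda>x. gp l n (f x))"
  unfolding gp_def by (intro continuous_intros)

lemma gp_0: "gp l 0 z = 1"
  by (simp add: gp_def ga_def)

lemma Tn_0:
  "2 powr ((l - 1/2) + (l + \<alpha> - 1/2) + 1) * Beta (l - 1/2 + 1) (l + \<alpha> - 1/2 + 1) = Tn 0 l \<alpha>"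
proof -
  have e1: "(l - 1/2) + (l + \<alpha> - 1/2) + 1 = 2*l + \<alpha>" "l - 1/2 + 1 = l + 1/2"
    "l + \<alpha> - 1/2 + 1 = l + \<alpha> + 1/2" "l + 1/2 + (l + \<alpha> + 1/2) = \<alpha> + 2*l + 1"
    by (simp_all add: field_simps)
  show ?thesis unfolding e1(1,2,3) Tn_def Beta_altdef e1(4) by simp
qed

lemma Tn_step:
  assumes l: "Re l > -1/2"
  shows "2*l*\<alpha>*Tn m (l+1) (\<alpha>-1) / (of_nat (Suc m) * (of_nat (Suc m) + 2*l)) = Tn (Suc m) l \<alpha>"
proof -
  define A where "A = (2::complex) powr (2*l+\<alpha>)"
  define G1 where "G1 = Gamma (l + 1/2)"
  define G2 where "G2 = Gamma (l + \<alpha> + 1/2)"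
  define PP where "PP = pochhammer (2*l+2) m"
  define Q where "Q = pochhammer (\<alpha> - of_nat (Suc m) + 1) m"
  define R where "R = rGamma (\<alpha> + 2*l + of_nat (Suc m) + 1)"
  define F where "F = (fact m :: complex)"
  define N where "N = (of_nat (Suc m) :: complex)"
  have N: "N \<noteq> 0" "N + 2*l \<noteq> 0" "F \<noteq> 0"
  proof -
    show "N \<noteq> 0" unfolding N_def by (simp only: of_nat_eq_0_iff)
    have "Re (N + 2*l) > 0" using l unfolding N_def by simp
    then show "N + 2*l \<noteq> 0" by (metis zero_complex.simps(1) order_less_irrefl)
    show "F \<noteq> 0" by (simp add: F_def)
  qed
  have a1: "(2::complex) powr (2*(l+1) + (\<alpha>-1)) = 2 * A"
  proof -
    have "2*(l+1) + (\<alpha>-1) = (2*l+\<alpha>) + 1" by (simp add: algebra_simps)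
    then show ?thesis unfolding A_def by (simp add: c2powr_add)
  qed
  have a2: "Gamma (l + 1 + 1/2) = (l + 1/2) * G1"
  proof -
    have e: "l + 1 + 1/2 = (l + 1/2) + 1" by simp
    have "l + 1/2 \<notin> \<int>\<^sub>\<le>\<^sub>0" using l by (intro Re_pos_not_nonpos_Int) simp
    then have "Gamma ((l + 1/2) + 1) = (l + 1/2) * Gamma (l + 1/2)" by (rule Gamma_plus1)
    then show ?thesis unfolding G1_def by (simp only: e)
  qed
  have a3: "Gamma (l + 1 + (\<alpha> - 1) + 1/2) = G2" unfolding G2_def by (simp add: algebra_simps)
  have a4: "pochhammer (2*(l+1)) m = PP" unfolding PP_def by (simp add: algebra_simps)
  have a5: "pochhammer (\<alpha> - 1 - of_nat m + 1) m = Q" unfolding Q_def by (simp add: algebra_simps)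
  have a6: "rGamma (\<alpha> - 1 + 2*(l+1) + of_nat m + 1) = R" unfolding R_def by (simp add: algebra_simps)
  have b1: "pochhammer (2*l) (Suc m) * (N + 2*l) = 2*l*(2*l+1)*PP"
  proof -
    have "pochhammer (2*l) (Suc (Suc m)) = 2*l*(2*l+1)*PP"
      unfolding PP_def by (simp add: pochhammer_rec algebra_simps)
    moreover have "pochhammer (2*l) (Suc (Suc m)) = pochhammer (2*l) (Suc m) * (N + 2*l)"
      unfolding N_def by (simp add: pochhammer_Suc algebra_simps)
    ultimately show ?thesis by simp
  qed
  have b2: "pochhammer (\<alpha> - of_nat (Suc m) + 1) (Suc m) = Q * \<alpha>"
    unfolding Q_def by (simp add: pochhammer_Suc algebra_simps)
  have b3: "(fact (Suc m) :: complex) = N * F" unfolding N_def F_def by simp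
  define D where "D = N + 2*l"
  have D: "D \<noteq> 0" using N by (simp add: D_def)
  have pn: "pochhammer (2*l) (Suc m) = 2*l*(2*l+1)*PP / D"
    using b1 D unfolding D_def[symmetric] by (simp add: field_simps)
  have lhs: "Tn m (l+1) (\<alpha>-1) = 2 * A * ((l + 1/2) * G1) * G2 * PP * Q / F * R"
    unfolding Tn_def a1 a2 a3 a4 a5 a6 F_def by simp
  have rhs: "Tn (Suc m) l \<alpha> = A * G1 * G2 * pochhammer (2*l) (Suc m) * (Q * \<alpha>) / (N * F) * R"
    unfolding Tn_def b2 b3 A_def G1_def G2_def R_def by simp
  show ?thesis unfolding lhs rhs pn N_def[symmetric] unfolding D_def[symmetric] using N D
    by (simp add: field_simps)
qed

lemma main_int:
  assumes "Re l > -1/2" "Re (l + \<alpha>) > -1/2"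
  shows "((\<lambda>x. Wf l \<alpha> x * gp l n (of_real x)) has_integral Tn n l \<alpha>) {-1..1}"
  using assms
proof (induction n arbitrary: l \<alpha>)
  case 0
  have e: "(\<lambda>x. Wf l \<alpha> x * gp l 0 (of_real x)) =
           (\<lambda>x. complex_of_real (1-x) powr (l-1/2) * of_real (1+x) powr (l+\<alpha>-1/2))"
    by (simp add: Wf_def gp_0 fun_eq_iff)
  show ?case unfolding e Tn_0[symmetric] by (rule Beta2) (use 0 in auto)
next
  case (Suc m)
  have IH: "((\<lambda>x. Wf (l+1) (\<alpha>-1) x * gp (l+1) m (of_real x)) has_integral Tn m (l+1) (\<alpha>-1)) {-1..1}"
    by (rule Suc.IH) (use Suc.prems in auto)
  define F where "F = (\<lambda>x. (1 - complex_of_real x) powr (l+1/2) * (1 + complex_of_real x) powr (l+\<alpha>+1/2)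
                            * gp (l+1) m (of_real x))"
  define Q where "Q = (\<lambda>x. (1 - (complex_of_real x)^2) * gpd (l+1) m (of_real x)
                            - (2*l+1) * of_real x * gp (l+1) m (of_real x))"
  have ftc: "((\<lambda>x. Wf l \<alpha> x * Q x + \<alpha> * (Wf (l+1) (\<alpha>-1) x * gp (l+1) m (of_real x)))
               has_integral (F 1 - F (-1))) {-1..1}"
  proof (rule fundamental_theorem_of_calculus_interior)
    show "-1 \<le> (1::real)" by simp
    show "continuous_on {-1..1} F" unfolding F_def using Suc.prems
      by (intro continuous_intros) auto
    fix x :: real assume x: "x \<in> {-1<..<1}"
    define z where "z = complex_of_real x"
    have d: "((\<lambda>z. (1-z) powr (l+1/2) * (1+z) powr (l+\<alpha>+1/2) * gp (l+1) m z) has_field_derivative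
        (- ((l+1/2) * (1-z) powr (l+1/2-1)) * (1+z) powr (l+\<alpha>+1/2) * gp (l+1) m z
         + (1-z) powr (l+1/2) * ((l+\<alpha>+1/2) * (1+z) powr (l+\<alpha>+1/2-1)) * gp (l+1) m z
         + (1-z) powr (l+1/2) * (1+z) powr (l+\<alpha>+1/2) * gpd (l+1) m z)) (at z)"
      using x unfolding z_def
      by (auto intro!: derivative_eq_intros gp_deriv simp: complex_nonpos_Reals_iff) (simp add: algebra_simps)
    have x1: "x < 1" "x > -1" using x by auto
    have e1: "l+1/2-1 = l-1/2" "l+\<alpha>+1/2-1 = l+\<alpha>-1/2" "l+1-1/2 = l+1/2" "l+1+(\<alpha>-1)-1/2 = l+\<alpha>-1/2"
      by (simp_all add: field_simps)
    have p1: "(1-z) powr (l+1/2) = (1-z) powr (l-1/2) * (1-z)"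
      using pw1[OF x1(1), of "l+1/2"] unfolding z_def e1 .
    have p2: "(1+z) powr (l+\<alpha>+1/2) = (1+z) powr (l+\<alpha>-1/2) * (1+z)"
      using pw2[OF x1(2), of "l+\<alpha>+1/2"] unfolding z_def e1 .
    have eq: "- ((l+1/2) * (1-z) powr (l+1/2-1)) * (1+z) powr (l+\<alpha>+1/2) * gp (l+1) m z
         + (1-z) powr (l+1/2) * ((l+\<alpha>+1/2) * (1+z) powr (l+\<alpha>+1/2-1)) * gp (l+1) m z
         + (1-z) powr (l+1/2) * (1+z) powr (l+\<alpha>+1/2) * gpd (l+1) m z
         = Wf l \<alpha> x * Q x + \<alpha> * (Wf (l+1) (\<alpha>-1) x * gp (l+1) m (of_real x))"
      unfolding Wf_def Q_def z_def[symmetric] e1 p1 p2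
      by (simp add: algebra_simps power2_eq_square)
    show "(F has_vector_derivative (Wf l \<alpha> x * Q x + \<alpha> * (Wf (l+1) (\<alpha>-1) x * gp (l+1) m (of_real x)))) (at x)"
      using has_vector_derivative_real_field[OF d[unfolded z_def], of UNIV] eq
      unfolding F_def z_def by simp
  qed
  have F1: "F 1 = 0" "F (-1) = 0" using Suc.prems by (simp_all add: F_def)
  have "((\<lambda>x. (Wf l \<alpha> x * Q x + \<alpha> * (Wf (l+1) (\<alpha>-1) x * gp (l+1) m (of_real x)))
             - \<alpha> * (Wf (l+1) (\<alpha>-1) x * gp (l+1) m (of_real x)))
          has_integral (0 - \<alpha> * Tn m (l+1) (\<alpha>-1))) {-1..1}"
    using has_integral_diff[OF ftc has_integral_mult_right[OF IH, of \<alpha>]] F1 by simp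
  then have WQ: "((\<lambda>x. Wf l \<alpha> x * Q x) has_integral (- \<alpha> * Tn m (l+1) (\<alpha>-1))) {-1..1}" by simp
  define c where "c = of_nat (Suc m) * (of_nat (Suc m) + 2*l)"
  have c: "c \<noteq> 0"
  proof -
    have "Re (of_nat (Suc m) + 2*l) > 0" using Suc.prems by simp
    then have "of_nat (Suc m) + 2*l \<noteq> 0" by (metis zero_complex.simps(1) order_less_irrefl)
    moreover have "(of_nat (Suc m) :: complex) \<noteq> 0" by (simp only: of_nat_eq_0_iff)
    ultimately show ?thesis unfolding c_def by simp
  qed
  have "((\<lambda>x. (-2*l/c) * (Wf l \<alpha> x * Q x)) has_integral (-2*l/c) * (- \<alpha> * Tn m (l+1) (\<alpha>-1))) {-1..1}"
    by (rule has_integral_mult_right[OF WQ])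
  moreover have "(-2*l/c) * (Wf l \<alpha> x * Q x) = Wf l \<alpha> x * gp l (Suc m) (of_real x)" for x
  proof -
    have h: "2*l*Q x = - c * gp l (Suc m) (of_real x)"
      using gp_lower[of "Suc m" l "of_real x"] unfolding Q_def c_def by simp
    have "(-2*l/c) * (Wf l \<alpha> x * Q x) = - (Wf l \<alpha> x * (2*l*Q x)) / c" by (simp add: algebra_simps)
    also have "\<dots> = Wf l \<alpha> x * gp l (Suc m) (of_real x)" unfolding h using c by simp
    finally show ?thesis .
  qed
  moreover have "(-2*l/c) * (- \<alpha> * Tn m (l+1) (\<alpha>-1)) = Tn (Suc m) l \<alpha>"
    using Tn_step[OF Suc.prems(1), of \<alpha> m] c unfolding c_def by (simp add: field_simps)
  ultimately show ?case by simp
qed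

lemma two_l_not_nonpos:
  assumes l: "Re l > -1/2" and l0: "l \<noteq> 0"
  shows "2*l \<notin> \<int>\<^sub>\<le>\<^sub>0"
proof
  assume "2*l \<in> \<int>\<^sub>\<le>\<^sub>0"
  then obtain k where k: "2*l = of_int k" "k \<le> 0" by (auto elim!: nonpos_Ints_cases)
  then have "Re (2*l) = Re (of_int k)" by simp
  then have "2 * Re l = real_of_int k" by simp
  with l have "real_of_int k > -1" by simp
  then have "k = 0" using k(2) by linarith
  with k l0 show False by simp
qed

lemma l_not_nonpos:
  assumes l: "Re l > -1/2" and l0: "l \<noteq> 0"
  shows "l \<notin> \<int>\<^sub>\<le>\<^sub>0"
proof
  assume "l \<in> \<int>\<^sub>\<le>\<^sub>0"
  then obtain k where k: "l = of_int k" "k \<le> 0" by (auto elim!: nonpos_Ints_cases)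
  then have "Re l = real_of_int k" by simp
  with l have "real_of_int k > -1/2" by simp
  then have "k = 0" using k(2) by linarith
  with k l0 show False by simp
qed

lemma n2l_not_nonpos:
  assumes l: "Re l > -1/2" and l0: "l \<noteq> 0"
  shows "of_nat n + 2*l \<notin> \<int>\<^sub>\<le>\<^sub>0"
proof
  assume "of_nat n + 2*l \<in> \<int>\<^sub>\<le>\<^sub>0"
  then obtain k where k: "of_nat n + 2*l = of_int k" "k \<le> 0" by (auto elim!: nonpos_Ints_cases)
  then have "2*l = of_int (k - int n)" by (simp add: algebra_simps)
  moreover have "k - int n \<le> 0" using k(2) by simp
  ultimately have "2*l \<in> \<int>\<^sub>\<le>\<^sub>0" by (metis nonpos_Ints_of_int)
  with two_l_not_nonpos[OF l l0] show False by simp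
qed

lemma an_not_nonpos:
  assumes a: "\<alpha> \<notin> \<int>"
  shows "\<alpha> - of_nat n + 1 \<notin> \<int>\<^sub>\<le>\<^sub>0"
proof
  assume "\<alpha> - of_nat n + 1 \<in> \<int>\<^sub>\<le>\<^sub>0"
  then obtain k where k: "\<alpha> - of_nat n + 1 = of_int k" by (auto elim!: nonpos_Ints_cases)
  then have "\<alpha> = of_int (k + int n - 1)" by (simp add: algebra_simps)
  then have "\<alpha> \<in> \<int>" by simp
  with a show False by simp
qed

lemma final_alg:
  assumes a: "\<alpha> \<notin> \<int>" and l0: "l \<noteq> 0" and l: "Re l > -1/2" and la: "Re (l+\<alpha>) > -1/2"
  shows "Tn n l \<alpha> / gegenbauer_h l n =
     2 powr (4*l + \<alpha> - 1) * (Gamma l)^2 * Gamma (\<alpha> + l + 1/2) * Gamma (l + 1/2)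
              * Gamma (\<alpha> + 1) * (of_nat n + l)
              / (complex_of_real pi * Gamma (2*l) * Gamma (\<alpha> - of_nat n + 1)
                 * Gamma (\<alpha> + 2*l + of_nat n + 1))"
proof -
  define A where "A = (2::complex) powr (2*l+\<alpha>)"
  define B where "B = (2::complex) powr (2*l-1)"
  define G1 where "G1 = Gamma (l + 1/2)"
  define G2 where "G2 = Gamma (l + \<alpha> + 1/2)"
  define Gl where "Gl = Gamma l"
  define G2l where "G2l = Gamma (2*l)"
  define Gn2l where "Gn2l = Gamma (of_nat n + 2*l)"
  define Ga1 where "Ga1 = Gamma (\<alpha> + 1)"
  define Gan where "Gan = Gamma (\<alpha> - of_nat n + 1)"
  define Gf where "Gf = Gamma (\<alpha> + 2*l + of_nat n + 1)"
  define F where "F = (fact n :: complex)"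
  define P where "P = complex_of_real pi"
  define L where "L = (of_nat n + l :: complex)"
  have nz: "B \<noteq> 0" "Gl \<noteq> 0" "G2l \<noteq> 0" "Gn2l \<noteq> 0" "Gan \<noteq> 0" "Gf \<noteq> 0" "F \<noteq> 0" "P \<noteq> 0" "L \<noteq> 0"
  proof -
    show "B \<noteq> 0" unfolding B_def by simp
    show "Gl \<noteq> 0" unfolding Gl_def Gamma_eq_zero_iff by (rule l_not_nonpos[OF l l0])
    show "G2l \<noteq> 0" unfolding G2l_def Gamma_eq_zero_iff by (rule two_l_not_nonpos[OF l l0])
    show "Gn2l \<noteq> 0" unfolding Gn2l_def Gamma_eq_zero_iff by (rule n2l_not_nonpos[OF l l0])
    show "Gan \<noteq> 0" unfolding Gan_def Gamma_eq_zero_iff by (rule an_not_nonpos[OF a])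
    have "Re (\<alpha> + 2*l + of_nat n + 1) > 0" using l la by simp
    then show "Gf \<noteq> 0" unfolding Gf_def Gamma_eq_zero_iff by (rule Re_pos_not_nonpos_Int)
    show "F \<noteq> 0" unfolding F_def by simp
    show "P \<noteq> 0" unfolding P_def by simp
    show "L \<noteq> 0"
    proof (cases n)
      case 0 then show ?thesis using l0 by (simp add: L_def)
    next
      case (Suc k)
      then have "Re L > 0" using l unfolding L_def by simp
      then show ?thesis by (metis zero_complex.simps(1) order_less_irrefl)
    qed
  qed
  have p1: "pochhammer (2*l) n = Gn2l / G2l"
    unfolding Gn2l_def G2l_def using pochhammer_Gamma[OF two_l_not_nonpos[OF l l0], of n]
    by (simp add: add_ac)
  have p2: "pochhammer (\<alpha> - of_nat n + 1) n = Ga1 / Gan"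
  proof -
    have "\<alpha> - of_nat n + 1 + of_nat n = \<alpha> + 1" by simp
    then show ?thesis unfolding Ga1_def Gan_def using pochhammer_Gamma[OF an_not_nonpos[OF a], of n]
      by simp
  qed
  have pw1: "(2::complex) powr (4*l + \<alpha> - 1) = A * B"
  proof -
    have e: "4*l + \<alpha> - 1 = (2*l+\<alpha>) + (2*l-1)" by (simp add: algebra_simps)
    show ?thesis unfolding A_def B_def e by (rule c2powr_add)
  qed
  have pw2: "(2::complex) powr (1 - 2*l) = inverse B"
  proof -
    have "(2::complex) powr (1 - 2*l) * B = 2 powr ((1 - 2*l) + (2*l - 1))" unfolding B_def by (rule c2powr_add[symmetric])
    also have "\<dots> = 1" by simp
    finally show ?thesis using nz(1) by (simp add: field_simps)
  qed
  have gf: "Gamma (of_nat n + 1) = F" unfolding F_def using Gamma_fact[of n] by (simp add: add_ac)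
  have T: "Tn n l \<alpha> = A * G1 * G2 * (Gn2l / G2l) * (Ga1 / Gan) / F * inverse Gf"
    unfolding Tn_def p1 p2 A_def G1_def G2_def F_def Gf_def rGamma_inverse_Gamma by (simp add: add_ac)
  have H: "gegenbauer_h l n = inverse B * P / Gl^2 * Gn2l / (F * L)"
    unfolding gegenbauer_h_def pw2 gf P_def Gl_def Gn2l_def L_def by simp
  have K: "2 powr (4*l + \<alpha> - 1) * (Gamma l)^2 * Gamma (\<alpha> + l + 1/2) * Gamma (l + 1/2)
              * Gamma (\<alpha> + 1) * (of_nat n + l)
              / (complex_of_real pi * Gamma (2*l) * Gamma (\<alpha> - of_nat n + 1)
                 * Gamma (\<alpha> + 2*l + of_nat n + 1)) =
           A * B * Gl^2 * G2 * G1 * Ga1 * L / (P * G2l * Gan * Gf)"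
    unfolding pw1 Gl_def G2_def G1_def Ga1_def L_def P_def G2l_def Gan_def Gf_def by (simp add: add_ac)
  show ?thesis unfolding T H K using nz by (simp add: field_simps)
qed

lemma gp_neg: "gp l n (-z) = (-1)^n * gp l n z"
  unfolding gp_def sum_distrib_left
proof (intro sum.cong refl)
  fix k assume "k \<in> {..n}"
  show "ga l n k * (2 * - z) ^ (n - 2 * k) = (-1) ^ n * (ga l n k * (2 * z) ^ (n - 2 * k))"
  proof (cases "2*k \<le> n")
    case True
    then obtain m where nm: "n = m + 2*k" by (metis add.commute le_add_diff_inverse)
    have "(2 * - z) ^ m = (-1)^m * (2*z)^m" by (simp add: power_minus')
    moreover have "((-1::complex) ^ (m + 2*k)) = (-1)^m" by (simp add: power_add power_mult)
    ultimately show ?thesis unfolding nm by simp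
  next
    case False then show ?thesis by (simp add: ga_def)
  qed
qed

lemma integrand_plus:
  assumes "-1 < x" "x < 1"
  shows "complex_of_real (1 - x^2) powr (l - 1/2) * complex_of_real (1 + x) powr \<alpha> * gegenbauer l n x
         = Wf l \<alpha> x * gp l n (of_real x)"
proof -
  have p: "1 - x > 0" "1 + x > 0" using assms by auto
  have e: "(1-x)*(1+x) = 1 - x^2" by (simp add: power2_eq_square algebra_simps)
  have m: "complex_of_real (1 - x^2) powr (l - 1/2) = of_real (1-x) powr (l-1/2) * of_real (1+x) powr (l-1/2)"
    using cpowr_mult_pos[OF p, of "l-1/2"] unfolding e .
  have ee: "l - 1/2 + \<alpha> = l + \<alpha> - 1/2" by simp
  have a: "complex_of_real (1+x) powr (l-1/2) * of_real (1+x) powr \<alpha> = of_real (1+x) powr (l+\<alpha>-1/2)"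
    using cpowr_add_pos[OF p(2), of "l-1/2" \<alpha>] unfolding ee by (rule sym)
  have "complex_of_real (1 - x^2) powr (l - 1/2) * complex_of_real (1 + x) powr \<alpha> * gegenbauer l n x
        = of_real (1-x) powr (l-1/2) * (of_real (1+x) powr (l-1/2) * of_real (1+x) powr \<alpha>) * gegenbauer l n x"
    unfolding m by (simp only: mult.assoc)
  also have "\<dots> = of_real (1-x) powr (l-1/2) * of_real (1+x) powr (l+\<alpha>-1/2) * gp l n (of_real x)"
    unfolding a gegenbauer_gp ..
  also have "\<dots> = Wf l \<alpha> x * gp l n (of_real x)" unfolding Wf_def by simp
  finally show ?thesis .
qed

lemma integrand_minus:
  assumes "-1 < x" "x < 1"
  shows "complex_of_real (1 - x^2) powr (l - 1/2) * complex_of_real (1 - x) powr \<alpha> * gegenbauer l n x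
         = (-1)^n * (Wf l \<alpha> (-x) * gp l n (of_real (-x)))"
proof -
  have p: "1 - x > 0" "1 + x > 0" using assms by auto
  have e: "(1-x)*(1+x) = 1 - x^2" by (simp add: power2_eq_square algebra_simps)
  have m: "complex_of_real (1 - x^2) powr (l - 1/2) = of_real (1-x) powr (l-1/2) * of_real (1+x) powr (l-1/2)"
    using cpowr_mult_pos[OF p, of "l-1/2"] unfolding e .
  have ee: "l - 1/2 + \<alpha> = l + \<alpha> - 1/2" by simp
  have a: "complex_of_real (1-x) powr (l-1/2) * of_real (1-x) powr \<alpha> = of_real (1-x) powr (l+\<alpha>-1/2)"
    using cpowr_add_pos[OF p(1), of "l-1/2" \<alpha>] unfolding ee by (rule sym)
  have "complex_of_real (1 - x^2) powr (l - 1/2) * complex_of_real (1 - x) powr \<alpha> * gegenbauer l n x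
        = (of_real (1-x) powr (l-1/2) * of_real (1-x) powr \<alpha>) * of_real (1+x) powr (l-1/2) * gegenbauer l n x"
    unfolding m by (simp only: mult.assoc mult.commute mult.left_commute)
  also have "\<dots> = of_real (1-x) powr (l+\<alpha>-1/2) * of_real (1+x) powr (l-1/2) * gp l n (of_real x)"
    unfolding a gegenbauer_gp ..
  also have "\<dots> = (-1)^n * (Wf l \<alpha> (-x) * gp l n (of_real (-x)))"
    unfolding Wf_def of_real_minus gp_neg by (simp add: algebra_simps)
  finally show ?thesis .
qed

theorem lemmaA1:
  fixes \<alpha> l :: complex
  assumes "Re \<alpha> > -1/2" and "\<alpha> \<notin> \<int>"
    and "l \<noteq> 0" and "Re l > -1/2" and "Re (l + \<alpha>) > -1/2"
  shows "\<forall>n::nat.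
     (let K = 2 powr (4*l + \<alpha> - 1) * (Gamma l)^2 * Gamma (\<alpha> + l + 1/2) * Gamma (l + 1/2)
              * Gamma (\<alpha> + 1) * (of_nat n + l)
              / (complex_of_real pi * Gamma (2*l) * Gamma (\<alpha> - of_nat n + 1)
                 * Gamma (\<alpha> + 2*l + of_nat n + 1))
      in gegenbauer_coeff l (\<lambda>x. complex_of_real (1 - x) powr \<alpha>) n = (-1)^n * K
       \<and> gegenbauer_coeff l (\<lambda>x. complex_of_real (1 + x) powr \<alpha>) n = K)"
proof
  fix n :: nat
  have M: "((\<lambda>x. Wf l \<alpha> x * gp l n (of_real x)) has_integral Tn n l \<alpha>) {-1..1}"
    by (rule main_int) (use assms in auto)
  have I1: "((\<lambda>x. complex_of_real (1 - x^2) powr (l - 1/2) * complex_of_real (1 + x) powr \<alpha> * gegenbauer l n x)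
             has_integral Tn n l \<alpha>) {-1..1}"
  proof (rule has_integral_spike_finite[where S="{-1,1}", OF _ _ M])
    fix x assume "x \<in> {-1..1::real} - {-1,1}"
    then have "-1 < x" "x < 1" by auto
    then show "complex_of_real (1 - x^2) powr (l - 1/2) * complex_of_real (1 + x) powr \<alpha> * gegenbauer l n x
         = Wf l \<alpha> x * gp l n (of_real x)" by (rule integrand_plus)
  qed simp
  have M2: "((\<lambda>x. Wf l \<alpha> (-x) * gp l n (of_real (-x))) has_integral Tn n l \<alpha>) {-1..1}"
    using has_integral_reflect_real[of "\<lambda>x. Wf l \<alpha> x * gp l n (of_real x)" "Tn n l \<alpha>" 1 "-1", THEN iffD2, OF M]
    by (simp only: minus_minus)
  have M3: "((\<lambda>x. (-1)^n * (Wf l \<alpha> (-x) * gp l n (of_real (-x)))) has_integral (-1)^n * Tn n l \<alpha>) {-1..1}"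
    by (rule has_integral_mult_right[OF M2])
  have I2: "((\<lambda>x. complex_of_real (1 - x^2) powr (l - 1/2) * complex_of_real (1 - x) powr \<alpha> * gegenbauer l n x)
             has_integral (-1)^n * Tn n l \<alpha>) {-1..1}"
  proof (rule has_integral_spike_finite[where S="{-1,1}", OF _ _ M3])
    fix x assume "x \<in> {-1..1::real} - {-1,1}"
    then have "-1 < x" "x < 1" by auto
    then show "complex_of_real (1 - x^2) powr (l - 1/2) * complex_of_real (1 - x) powr \<alpha> * gegenbauer l n x
         = (-1)^n * (Wf l \<alpha> (-x) * gp l n (of_real (-x)))" by (rule integrand_minus)
  qed simp
  have C1: "gegenbauer_coeff l (\<lambda>x. complex_of_real (1 + x) powr \<alpha>) n = Tn n l \<alpha> / gegenbauer_h l n"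
    unfolding gegenbauer_coeff_def using integral_unique[OF I1] by simp
  have C2: "gegenbauer_coeff l (\<lambda>x. complex_of_real (1 - x) powr \<alpha>) n = (-1)^n * (Tn n l \<alpha> / gegenbauer_h l n)"
    unfolding gegenbauer_coeff_def using integral_unique[OF I2] by simp
  show "let K = 2 powr (4*l + \<alpha> - 1) * (Gamma l)^2 * Gamma (\<alpha> + l + 1/2) * Gamma (l + 1/2)
              * Gamma (\<alpha> + 1) * (of_nat n + l)
              / (complex_of_real pi * Gamma (2*l) * Gamma (\<alpha> - of_nat n + 1)
                 * Gamma (\<alpha> + 2*l + of_nat n + 1))
      in gegenbauer_coeff l (\<lambda>x. complex_of_real (1 - x) powr \<alpha>) n = (-1)^n * K
       \<and> gegenbauer_coeff l (\<lambda>x. complex_of_real (1 + x) powr \<alpha>) n = K"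
    unfolding Let_def C1 C2 final_alg[OF assms(2-5)] by simp
qed


end
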